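(* Let $P\in(0,1)$ be irrational and let $V\in\mathbb R^3$ be a good offset for $\Xi_P$. Then the tiling defined by $\Xi_{P,V}$ is coherent: for any two unit squares sharing an edge $e$, the letter of $e$ (as seen from each square) occurs in the label of one square if and only if it occurs in the label of the other.
   Context: Let $\Lambda_P\subset\mathbb R^3$ be the lattice generated by $(2,P,P),(0,2,0),(0,0,2)$, $X_P=\mathbb R^3/\Lambda_P$ with coordinates $(T,U_1,U_2)$ and fundamental domain $[-1,1]^3$, $\Xi_P(x,y)=(2Px+2y,2Px,2Px+2Py)\bmod\Lambda_P$, and for $V\in\mathbb R^3$, $\Xi_{P,V}=\Xi_P+V\bmod\Lambda_P$. Each fiber $\{T\}\times[-1,1]^2$ is partitioned: given $u_1\le u_2\le u_3$, the lines $U_1=u_i$, $U_2=u_i$ cut $[-1,1]^2$ into a $4\times4$ grid of rectangles indexed by (column $a$, row $b$), columns in increasing $U_1$, rows in increasing $U_2$. Special rectangles with single letters: for $T\in[-1,-1+P]$: $(u_1,u_2,u_3)=(T,1-P,2-P+T)$, W $(4,4)$, N $(1,3)$, E $(2,2)$, S $(3,1)$; for $T\in[-1+P,1-P]$: $(-1+P,T,1-P)$, N $(1,4)$, E $(3,3)$, W $(2,2)$, S $(4,1)$; for $T\in[1-P,1]$: $(-2+P+T,-1+P,T)$, N $(2,4)$, W $(3,3)$, S $(4,2)$, E $(1,1)$. A non-special rectangle gets the unordered pair of letters of the special rectangles in its column and in its row; special rectangles get the empty label. The pieces of the partition are the unions over all fibers of rectangles with a given label. Tile centers are the points $(m+\frac12,n+\frac12)$,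 $m,n\in\mathbb Z$, each the center of a unit square with edges N, S, E, W. $V$ is a good offset if $\Xi_{P,V}(c)$ lies in the interior of a piece for every tile center $c$; the tile at $c$ then carries the label of that piece, a label $\{X,Y\}$ meaning a segment joining the midpoints of edges $X$ and $Y$. *)

theory Defs
  imports "HOL-Analysis.Analysis"
begin

datatype letter = LN | LS | LE | LW

type_synonym pt3 = "real \<times> real \<times> real"

definition Lambda :: "real \<Rightarrow> pt3 set" where
  "Lambda P = {(2 * of_int i, P * of_int i + 2 * of_int j, P * of_int i + 2 * of_int k) | i j k :: int. True}"

definition regime_ok :: "real \<Rightarrow> nat \<Rightarrow> real \<Rightarrow> bool" where
  "regime_ok P r T =
     ((r = 1 \<and> -1 \<le> T \<and> T \<le> -1 + P) \<or>
      (r = 2 \<and> -1 + P \<le> T \<and> T \<le> 1 - P) \<or>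
      (r = 3 \<and> 1 - P \<le> T \<and> T \<le> 1))"

definition cutval :: "real \<Rightarrow> nat \<Rightarrow> real \<Rightarrow> nat \<Rightarrow> real" where
  "cutval P r T i =
     (if i = 0 then -1 else if i = 4 then 1 else
      (if r = 1 then (if i = 1 then T else if i = 2 then 1 - P else 2 - P + T)
       else if r = 2 then (if i = 1 then -1 + P else if i = 2 then T else 1 - P)
       else (if i = 1 then -2 + P + T else if i = 2 then -1 + P else T)))"

text \<open>Special rectangles (column, row) of each letter in each regime.\<close>
definition special :: "nat \<Rightarrow> letter \<Rightarrow> nat \<times> nat" where
  "special r X =
     (if r = 1 then (case X of LW \<Rightarrow> (4,4) | LN \<Rightarrow> (1,3) | LE \<Rightarrow> (2,2) | LS \<Rightarrow> (3,1))
      else if r = 2 then (case X of LN \<Rightarrow> (1,4) | LE \<Rightarrow> (3,3) | LW \<Rightarrow> (2,2) | LS \<Rightarrow> (4,1))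
      else (case X of LN \<Rightarrow> (2,4) | LW \<Rightarrow> (3,3) | LS \<Rightarrow> (4,2) | LE \<Rightarrow> (1,1)))"

definition rect_label :: "nat \<Rightarrow> nat \<Rightarrow> nat \<Rightarrow> letter set" where
  "rect_label r a b =
     (if (a, b) \<in> range (special r) then {}
      else {X. fst (special r X) = a} \<union> {Y. snd (special r Y) = b})"

definition rect :: "real \<Rightarrow> nat \<Rightarrow> real \<Rightarrow> nat \<Rightarrow> nat \<Rightarrow> (real \<times> real) set" where
  "rect P r T a b = {cutval P r T (a - 1) .. cutval P r T a} \<times> {cutval P r T (b - 1) .. cutval P r T b}"

definition fd_piece :: "real \<Rightarrow> letter set \<Rightarrow> pt3 set" where
  "fd_piece P L = {(T, U1, U2). -1 \<le> T \<and> T \<le> 1 \<and>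
      (\<exists>r a b. regime_ok P r T \<and> a \<in> {1..4} \<and> b \<in> {1..4} \<and>
               (U1, U2) \<in> rect P r T a b \<and> rect_label r a b = L)}"

text \<open>The piece, lifted to a Lambda_P-periodic subset of R^3 (preimage under the
  quotient map R^3 \<rightarrow> X_P).\<close>
definition piece :: "real \<Rightarrow> letter set \<Rightarrow> pt3 set" where
  "piece P L = {(t, u1, u2). \<exists>(l0, l1, l2) \<in> Lambda P. (t + l0, u1 + l1, u2 + l2) \<in> fd_piece P L}"

definition Xi :: "real \<Rightarrow> pt3 \<Rightarrow> real \<Rightarrow> real \<Rightarrow> pt3" where
  "Xi P V x y = (case V of (v0, v1, v2) \<Rightarrow>
      (2 * P * x + 2 * y + v0, 2 * P * x + v1, 2 * P * x + 2 * P * y + v2))"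

definition Xi_center :: "real \<Rightarrow> pt3 \<Rightarrow> int \<Rightarrow> int \<Rightarrow> pt3" where
  "Xi_center P V m n = Xi P V (of_int m + 1/2) (of_int n + 1/2)"

definition good_offset :: "real \<Rightarrow> pt3 \<Rightarrow> bool" where
  "good_offset P V = (\<forall>m n :: int. \<exists>L. Xi_center P V m n \<in> interior (piece P L))"

definition tiling_of :: "real \<Rightarrow> pt3 \<Rightarrow> (int \<Rightarrow> int \<Rightarrow> letter set) \<Rightarrow> bool" where
  "tiling_of P V lab = (\<forall>m n. Xi_center P V m n \<in> interior (piece P (lab m n)))"

definition coherent :: "(int \<Rightarrow> int \<Rightarrow> letter set) \<Rightarrow> bool" where
  "coherent lab = (\<forall>m n.
      (LE \<in> lab m n \<longleftrightarrow> LW \<in> lab (m + 1) n) \<and>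
      (LN \<in> lab m n \<longleftrightarrow> LS \<in> lab m (n + 1)))"

end

theory Submission
  imports Defs
begin

definition rg :: "real \<Rightarrow> real \<Rightarrow> nat" where
  "rg P T = (if T < -1 + P then 1 else if T < 1 - P then 2 else 3)"

definition psi :: "real \<Rightarrow> letter \<Rightarrow> pt3 \<Rightarrow> bool" where
  "psi P X y = (case y of (T, U1, U2) \<Rightarrow>
     (cutval P (rg P T) T (fst (special (rg P T) X) - 1) \<le> U1 \<and> U1 < cutval P (rg P T) T (fst (special (rg P T) X)))
   \<noteq> (cutval P (rg P T) T (snd (special (rg P T) X) - 1) \<le> U2 \<and> U2 < cutval P (rg P T) T (snd (special (rg P T) X))))"

lemma psiE: "psi P LE (T,U1,U2) = (if T < -1 + P then ((T \<le> U1 \<and> U1 < 1-P) \<noteq> (T \<le> U2 \<and> U2 < 1-P))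
   else if T < 1 - P then ((T \<le> U1 \<and> U1 < 1-P) \<noteq> (T \<le> U2 \<and> U2 < 1-P))
   else ((-1 \<le> U1 \<and> U1 < -2+P+T) \<noteq> (-1 \<le> U2 \<and> U2 < -2+P+T)))"
  by (auto simp: psi_def rg_def special_def cutval_def)

lemma psiW: "psi P LW (T,U1,U2) = (if T < -1 + P then ((2-P+T \<le> U1 \<and> U1 < 1) \<noteq> (2-P+T \<le> U2 \<and> U2 < 1))
   else if T < 1 - P then ((-1+P \<le> U1 \<and> U1 < T) \<noteq> (-1+P \<le> U2 \<and> U2 < T))
   else ((-1+P \<le> U1 \<and> U1 < T) \<noteq> (-1+P \<le> U2 \<and> U2 < T)))"
  by (auto simp: psi_def rg_def special_def cutval_def)

lemma psiN: "psi P LN (T,U1,U2) = (if T < -1 + P then ((-1 \<le> U1 \<and> U1 < T) \<noteq> (1-P \<le> U2 \<and> U2 < 2-P+T))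
   else if T < 1 - P then ((-1 \<le> U1 \<and> U1 < -1+P) \<noteq> (1-P \<le> U2 \<and> U2 < 1))
   else ((-2+P+T \<le> U1 \<and> U1 < -1+P) \<noteq> (T \<le> U2 \<and> U2 < 1)))"
  by (auto simp: psi_def rg_def special_def cutval_def)

lemma psiS: "psi P LS (T,U1,U2) = (if T < -1 + P then ((1-P \<le> U1 \<and> U1 < 2-P+T) \<noteq> (-1 \<le> U2 \<and> U2 < T))
   else if T < 1 - P then ((1-P \<le> U1 \<and> U1 < 1) \<noteq> (-1 \<le> U2 \<and> U2 < -1+P))
   else ((T \<le> U1 \<and> U1 < 1) \<noteq> (-2+P+T \<le> U2 \<and> U2 < -1+P)))"
  by (auto simp: psi_def rg_def special_def cutval_def)

definition eE :: "real \<Rightarrow> real \<Rightarrow> real \<Rightarrow> bool" where "eE P T U = (if T < -1 + P then (T \<le> U \<and> U < 1-P)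
   else if T < 1 - P then (T \<le> U \<and> U < 1-P) else (-1 \<le> U \<and> U < -2+P+T))"
definition eW :: "real \<Rightarrow> real \<Rightarrow> real \<Rightarrow> bool" where "eW P T U = (if T < -1 + P then (2-P+T \<le> U \<and> U < 1)
   else if T < 1 - P then (-1+P \<le> U \<and> U < T) else (-1+P \<le> U \<and> U < T))"
definition eNc :: "real \<Rightarrow> real \<Rightarrow> real \<Rightarrow> bool" where "eNc P T U = (if T < -1 + P then (-1 \<le> U \<and> U < T)
   else if T < 1 - P then (-1 \<le> U \<and> U < -1+P) else (-2+P+T \<le> U \<and> U < -1+P))"
definition eNr :: "real \<Rightarrow> real \<Rightarrow> real \<Rightarrow> bool" where "eNr P T U = (if T < -1 + P then (1-P \<le> U \<and> U < 2-P+T)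
   else if T < 1 - P then (1-P \<le> U \<and> U < 1) else (T \<le> U \<and> U < 1))"
definition eSc :: "real \<Rightarrow> real \<Rightarrow> real \<Rightarrow> bool" where "eSc P T U = (if T < -1 + P then (1-P \<le> U \<and> U < 2-P+T)
   else if T < 1 - P then (1-P \<le> U \<and> U < 1) else (T \<le> U \<and> U < 1))"
definition eSr :: "real \<Rightarrow> real \<Rightarrow> real \<Rightarrow> bool" where "eSr P T U = (if T < -1 + P then (-1 \<le> U \<and> U < T)
   else if T < 1 - P then (-1 \<le> U \<and> U < -1+P) else (-2+P+T \<le> U \<and> U < -1+P))"

lemma psiE': "psi P LE (T,U1,U2) = (eE P T U1 \<noteq> eE P T U2)"
  unfolding psiE eE_def by simp
lemma psiW': "psi P LW (T,U1,U2) = (eW P T U1 \<noteq> eW P T U2)"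
  unfolding psiW eW_def by simp
lemma psiN': "psi P LN (T,U1,U2) = (eNc P T U1 \<noteq> eNr P T U2)"
  unfolding psiN eNc_def eNr_def by simp
lemma psiS': "psi P LS (T,U1,U2) = (eSc P T U1 \<noteq> eSr P T U2)"
  unfolding psiS eSc_def eSr_def by simp

lemma EW0: assumes "0 < P" "P < 1" "-1 \<le> T" "T < 1" "-1 \<le> U" "U < 1" "-1 \<le> T + 2*P" "T + 2*P < 1"
  "-1 \<le> U'" "U' < 1" "U' = U + 2*P \<or> U' = U + 2*P - 2"
  shows "eE P T U = (\<not> eW P (T + 2*P) U')"
  using assms unfolding eE_def eW_def by (elim disjE; simp split: if_split_asm; linarith)

lemma EW1: assumes "0 < P" "P < 1" "-1 \<le> T" "T < 1" "-1 \<le> U" "U < 1" "-1 \<le> T + 2*P - 2" "T + 2*P - 2 < 1"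
  "-1 \<le> U'" "U' < 1" "U' = U + P \<or> U' = U + P - 2"
  shows "eE P T U = eW P (T + 2*P - 2) U'"
  using assms unfolding eE_def eW_def by (elim disjE; simp split: if_split_asm; linarith)

lemma NSc: assumes "0 < P" "P < 1" "-1 \<le> T" "T < 1" "-1 \<le> U" "U < 1"
  "-1 \<le> U'" "U' < 1" "U' = U - P \<or> U' = U - P + 2"
  shows "eNc P T U = eSc P T U'"
  using assms unfolding eNc_def eSc_def by (elim disjE; simp split: if_split_asm; linarith)

lemma NSr: assumes "0 < P" "P < 1" "-1 \<le> T" "T < 1" "-1 \<le> U" "U < 1"
  "-1 \<le> U'" "U' < 1" "U' = U + P \<or> U' = U + P - 2"
  shows "eNr P T U = eSr P T U'"
  using assms unfolding eNr_def eSr_def by (elim disjE; simp split: if_split_asm; linarith)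

lemma EW:
  assumes P: "0 < P" "P < 1"
    and c: "-1 \<le> T" "T < 1" "-1 \<le> U1" "U1 < 1" "-1 \<le> U2" "U2 < 1"
    "-1 \<le> T'" "T' < 1" "-1 \<le> U1'" "U1' < 1" "-1 \<le> U2'" "U2' < 1"
    and e: "T' = T + 2*P + 2 * of_int i" "U1' = U1 + 2*P + P * of_int i + 2 * of_int j"
           "U2' = U2 + 2*P + P * of_int i + 2 * of_int k"
  shows "psi P LE (T,U1,U2) = psi P LW (T',U1',U2')"
proof -
  have "real_of_int i > -2" "real_of_int i < 1" using e c P by linarith+
  hence hi: "i = 0 \<or> i = -1" by linarith
  show ?thesis
  proof (cases "i = 0")
    case True
    hence pi: "P * real_of_int i = 0" "real_of_int i = 0" by simp_all
    have "real_of_int j > -2" "real_of_int j < 1" using pi e c P by linarith+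
    hence hj: "j = 0 \<or> j = -1" by linarith
    have "real_of_int k > -2" "real_of_int k < 1" using pi e c P by linarith+
    hence hk: "k = 0 \<or> k = -1" by linarith
    have e1: "T' = T + 2*P" using e(1) pi by simp
    have e2: "U1' = U1 + 2*P \<or> U1' = U1 + 2*P - 2" using e(2) pi hj by auto
    have e3: "U2' = U2 + 2*P \<or> U2' = U2 + 2*P - 2" using e(3) pi hk by auto
    have "eE P T U1 = (\<not> eW P T' U1')" "eE P T U2 = (\<not> eW P T' U2')"
      using EW0[OF P c(1,2,3,4) _ _ c(9,10) e2] EW0[OF P c(1,2,5,6) _ _ c(11,12) e3] e1 c by auto
    thus ?thesis unfolding psiE' psiW' by auto
  next
    case False
    hence pi: "P * real_of_int i = -P" "real_of_int i = -1" using hi by simp_all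
    have "real_of_int j > -2" "real_of_int j < 1" using pi e c P by linarith+
    hence hj: "j = 0 \<or> j = -1" by linarith
    have "real_of_int k > -2" "real_of_int k < 1" using pi e c P by linarith+
    hence hk: "k = 0 \<or> k = -1" by linarith
    have e1: "T' = T + 2*P - 2" using e(1) pi by simp
    have e2: "U1' = U1 + P \<or> U1' = U1 + P - 2" using e(2) pi hj by auto
    have e3: "U2' = U2 + P \<or> U2' = U2 + P - 2" using e(3) pi hk by auto
    have "eE P T U1 = eW P T' U1'" "eE P T U2 = eW P T' U2'"
      using EW1[OF P c(1,2,3,4) _ _ c(9,10) e2] EW1[OF P c(1,2,5,6) _ _ c(11,12) e3] e1 c by auto
    thus ?thesis unfolding psiE' psiW' by auto
  qed
qed

lemma NS:
  assumes P: "0 < P" "P < 1"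
    and c: "-1 \<le> T" "T < 1" "-1 \<le> U1" "U1 < 1" "-1 \<le> U2" "U2 < 1"
    "-1 \<le> T'" "T' < 1" "-1 \<le> U1'" "U1' < 1" "-1 \<le> U2'" "U2' < 1"
    and e: "T' = T + 2 + 2 * of_int i" "U1' = U1 + P * of_int i + 2 * of_int j"
           "U2' = U2 + 2*P + P * of_int i + 2 * of_int k"
  shows "psi P LN (T,U1,U2) = psi P LS (T',U1',U2')"
proof -
  have "real_of_int i > -2" "real_of_int i < 0" using e c P by linarith+
  hence hi: "i = -1" by linarith
  hence pi: "P * real_of_int i = -P" by simp
  have "real_of_int j > -1" "real_of_int j < 2" using pi e c P by linarith+
  hence hj: "j = 0 \<or> j = 1" by linarith
  have "real_of_int k > -2" "real_of_int k < 1" using pi e c P by linarith+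
  hence hk: "k = 0 \<or> k = -1" by linarith
  have ri: "real_of_int i = -1" using hi by simp
  have e1: "T' = T" using e(1) ri by simp
  have e2: "U1' = U1 - P \<or> U1' = U1 - P + 2" using e(2) pi hj by auto
  have e3: "U2' = U2 + P \<or> U2' = U2 + P - 2" using e(3) pi hk by auto
  have "eNc P T U1 = eSc P T U1'" "eNr P T U2 = eSr P T U2'"
    using NSc[OF P c(1,2,3,4) c(9,10) e2] NSr[OF P c(1,2,5,6) c(11,12) e3] by auto
  thus ?thesis unfolding psiN' psiS' e1 by auto
qed

definition Bset :: "real \<Rightarrow> real set" where
  "Bset P = {x. \<exists>a b::int. x = of_int a + of_int b * P}"

definition gen :: "real \<Rightarrow> pt3 \<Rightarrow> bool" where
  "gen P y = (case y of (T,U1,U2) \<Rightarrow> T \<notin> Bset P \<and> U1 \<notin> Bset P \<and> U2 \<notin> Bset P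
      \<and> U1 - T \<notin> Bset P \<and> U2 - T \<notin> Bset P)"

lemma inB: "of_int a + of_int b * P \<in> Bset P"
  unfolding Bset_def by blast

lemma Bshift: assumes "x + (of_int a + of_int b * P) \<in> Bset P" shows "x \<in> Bset P"
proof -
  obtain c d :: int where "x + (of_int a + of_int b * P) = of_int c + of_int d * P"
    using assms unfolding Bset_def by blast
  hence "x = of_int (c - a) + of_int (d - b) * P" by (simp add: algebra_simps)
  thus ?thesis by (rule ssubst) (rule inB)
qed

lemma notB: assumes "x \<notin> Bset P" shows "x \<noteq> of_int a + of_int b * P"
  using assms inB by metis

lemma genT: assumes "T \<notin> Bset P" shows "T \<noteq> -1" "T \<noteq> 1" "T \<noteq> -1+P" "T \<noteq> 1-P"
  using notB[OF assms, of "-1" 0] notB[OF assms, of 1 0] notB[OF assms, of "-1" 1] notB[OF assms, of 1 "-1"]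
  by (auto simp: algebra_simps)

lemma genU: assumes "U \<notin> Bset P" "U - T \<notin> Bset P"
  shows "U \<noteq> -1" "U \<noteq> 1" "U \<noteq> T" "U \<noteq> 1-P" "U \<noteq> 2-P+T" "U \<noteq> -1+P" "U \<noteq> -2+P+T"
  using notB[OF assms(1), of "-1" 0] notB[OF assms(1), of 1 0] notB[OF assms(2), of 0 0]
    notB[OF assms(1), of 1 "-1"] notB[OF assms(2), of 2 "-1"] notB[OF assms(1), of "-1" 1]
    notB[OF assms(2), of "-2" 1]
  by (auto simp: algebra_simps)

lemma special_range: "r \<in> {1,2,3} \<Longrightarrow> fst (special r X) \<in> {1..4} \<and> snd (special r X) \<in> {1..4}"
  by (cases X) (auto simp: special_def)

lemma special_perm: "r \<in> {1,2,3} \<Longrightarrow> (fst (special r X) = fst (special r Z)) = (snd (special r X) = snd (special r Z))"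
  by (cases X; cases Z) (auto simp: special_def)

lemma label_mem: assumes "r \<in> {1,2,3}"
  shows "(X \<in> rect_label r a b) = ((fst (special r X) = a) \<noteq> (snd (special r X) = b))"
proof (cases "(a, b) \<in> range (special r)")
  case True
  then obtain Z where "(a,b) = special r Z" by auto
  hence "a = fst (special r Z)" "b = snd (special r Z)" by (metis fst_conv, metis snd_conv)
  thus ?thesis using True special_perm[OF assms, of X Z] unfolding rect_label_def by simp
next
  case False
  have "\<not> (fst (special r X) = a \<and> snd (special r X) = b)"
  proof
    assume "fst (special r X) = a \<and> snd (special r X) = b"
    hence "(a,b) = special r X" by (metis prod.collapse)
    thus False using False by auto
  qed
  thus ?thesis using False unfolding rect_label_def by auto
qed

lemma col_abs:
  fixes f :: "nat \<Rightarrow> real"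
  assumes "f 0 < f 1" "f 1 < f 2" "f 2 < f 3" "f 3 < f 4"
    and a: "a \<in> {1..4}" and cc: "c \<in> {1..4}" and U: "f (a-1) < U" "U < f a"
  shows "(a = c) = (f (c-1) \<le> U \<and> U < f c)"
proof -
  have ha: "a = 1 \<or> a = 2 \<or> a = 3 \<or> a = 4" using a by auto
  have hc: "c = 1 \<or> c = 2 \<or> c = 3 \<or> c = 4" using cc by auto
  from ha hc show ?thesis using assms(1-4) U by (elim disjE; simp; smt)
qed

lemma cv_mono:
  assumes P: "0 < P" "P < 1" and r: "r = rg P T" and T: "-1 < T" "T < 1" "T \<noteq> -1+P" "T \<noteq> 1-P"
  shows "cutval P r T 0 < cutval P r T 1" "cutval P r T 1 < cutval P r T 2"
        "cutval P r T 2 < cutval P r T 3" "cutval P r T 3 < cutval P r T 4"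
  using assms unfolding rg_def cutval_def by (auto split: if_split_asm)

lemma cv_ne:
  assumes r: "r \<in> {1,2,3}"
    and U: "U \<noteq> -1" "U \<noteq> 1" "U \<noteq> T" "U \<noteq> 1-P" "U \<noteq> 2-P+T" "U \<noteq> -1+P" "U \<noteq> -2+P+T"
  shows "U \<noteq> cutval P r T i"
  using assms unfolding cutval_def by auto

lemma col:
  assumes P: "0 < P" "P < 1" and r: "r = rg P T" and T: "-1 < T" "T < 1" "T \<noteq> -1+P" "T \<noteq> 1-P"
    and a: "a \<in> {1..4}" and cc: "c \<in> {1..4}"
    and U: "cutval P r T (a-1) \<le> U" "U \<le> cutval P r T a"
    "U \<noteq> -1" "U \<noteq> 1" "U \<noteq> T" "U \<noteq> 1-P" "U \<noteq> 2-P+T" "U \<noteq> -1+P" "U \<noteq> -2+P+T"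
  shows "(a = c) = (cutval P r T (c-1) \<le> U \<and> U < cutval P r T c)"
proof -
  have r3: "r \<in> {1,2,3}" using r unfolding rg_def by auto
  have "U \<noteq> cutval P r T (a-1)" "U \<noteq> cutval P r T a" using cv_ne[OF r3 U(3-9)] by auto
  hence "cutval P r T (a-1) < U" "U < cutval P r T a" using U(1,2) by linarith+
  thus ?thesis using col_abs[OF cv_mono[OF P r T] a cc] by blast
qed

lemma cv_bounds: "regime_ok P r T \<Longrightarrow> 0 < P \<Longrightarrow> P < 1 \<Longrightarrow> -1 \<le> cutval P r T i \<and> cutval P r T i \<le> 1"
  unfolding regime_ok_def cutval_def by auto

lemma fdA:
  assumes P: "0 < P" "P < 1" and y: "(T,U1,U2) \<in> fd_piece P L" and g: "gen P (T,U1,U2)"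
  shows "(X \<in> L) = psi P X (T,U1,U2)
     \<and> -1 \<le> T \<and> T < 1 \<and> -1 \<le> U1 \<and> U1 < 1 \<and> -1 \<le> U2 \<and> U2 < 1"
proof -
  have gT: "T \<notin> Bset P" and gU1: "U1 \<notin> Bset P" "U1 - T \<notin> Bset P"
    and gU2: "U2 \<notin> Bset P" "U2 - T \<notin> Bset P" using g unfolding gen_def by auto
  obtain r a b where ro: "regime_ok P r T" and a: "a \<in> {1..4}" and b: "b \<in> {1..4}"
    and re: "(U1,U2) \<in> rect P r T a b" and L: "rect_label r a b = L" and Tb: "-1 \<le> T" "T \<le> 1"
    using y unfolding fd_piece_def by blast
  note tne = genT[OF gT]
  have T: "-1 < T" "T < 1" using Tb tne by auto
  have r: "r = rg P T" using ro tne P unfolding regime_ok_def rg_def by auto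
  have r3: "r \<in> {1,2,3}" using r unfolding rg_def by auto
  have u1: "cutval P r T (a-1) \<le> U1" "U1 \<le> cutval P r T a"
   and u2: "cutval P r T (b-1) \<le> U2" "U2 \<le> cutval P r T b" using re unfolding rect_def by auto
  note sr = special_range[OF r3, of X]
  have c1: "(a = fst (special r X)) = (cutval P r T (fst (special r X) - 1) \<le> U1 \<and> U1 < cutval P r T (fst (special r X)))"
    using col[OF P r T(1,2) tne(3,4) a _ u1 genU[OF gU1]] sr by blast
  have c2: "(b = snd (special r X)) = (cutval P r T (snd (special r X) - 1) \<le> U2 \<and> U2 < cutval P r T (snd (special r X)))"
    using col[OF P r T(1,2) tne(3,4) b _ u2 genU[OF gU2]] sr by blast
  have ps: "psi P X (T,U1,U2) = ((cutval P r T (fst (special r X) - 1) \<le> U1 \<and> U1 < cutval P r T (fst (special r X)))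
     \<noteq> (cutval P r T (snd (special r X) - 1) \<le> U2 \<and> U2 < cutval P r T (snd (special r X))))"
    unfolding psi_def using r by simp
  have lm: "(X \<in> L) = ((fst (special r X) = a) \<noteq> (snd (special r X) = b))"
    using label_mem[OF r3, of X a b] L by simp
  have "(X \<in> L) = psi P X (T,U1,U2)"
    unfolding ps lm c1[symmetric] c2[symmetric] by auto
  moreover have "-1 \<le> U1" "U1 \<le> 1" "-1 \<le> U2" "U2 \<le> 1"
    using u1 u2 cv_bounds[OF ro P] by (meson order_trans)+
  moreover have "U1 < 1" "U2 < 1" using calculation(3,5) genU(2)[OF gU1] genU(2)[OF gU2] by (simp_all add: less_le)
  ultimately show ?thesis using T by auto
qed

lemma notB2: "x \<notin> Bset P \<Longrightarrow> y = x + (of_int a + of_int b * P) \<Longrightarrow> y \<notin> Bset P"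
  using Bshift by blast

lemma countB: "countable (Bset P)"
proof -
  have "Bset P = (\<lambda>(a,b). of_int a + of_int b * P) ` (UNIV :: (int \<times> int) set)"
    unfolding Bset_def by auto
  thus ?thesis by (metis countableI_type countable_image)
qed

lemma avoid: fixes x :: real assumes "countable S" "0 < e" shows "\<exists>d. \<bar>d\<bar> < e \<and> x + d \<notin> S"
proof -
  have "uncountable {x-e<..<x+e}" using assms(2) uncountable_open_interval by simp
  hence "\<not> {x-e<..<x+e} \<subseteq> S" using assms(1) countable_subset by blast
  then obtain z where "z \<in> {x-e<..<x+e}" "z \<notin> S" by blast
  thus ?thesis by (intro exI[of _ "z - x"]) auto
qed

lemma exists_gen: assumes "0 < e"
  shows "\<exists>d0 d1 d2. \<bar>d0\<bar> < e \<and> \<bar>d1\<bar> < e \<and> \<bar>d2\<bar> < e \<and> gen P (t+d0, u1+d1, u2+d2)"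
proof -
  obtain d0 where d0: "\<bar>d0\<bar> < e" "t + d0 \<notin> Bset P" using avoid[OF countB assms] by blast
  let ?S = "Bset P \<union> (\<lambda>b. b + (t + d0)) ` Bset P"
  have cS: "countable ?S" using countB by auto
  obtain d1 where d1: "\<bar>d1\<bar> < e" "u1 + d1 \<notin> ?S" using avoid[OF cS assms] by blast
  obtain d2 where d2: "\<bar>d2\<bar> < e" "u2 + d2 \<notin> ?S" using avoid[OF cS assms] by blast
  have "u1 + d1 - (t + d0) \<notin> Bset P"
  proof
    assume "u1 + d1 - (t + d0) \<in> Bset P"
    hence "u1 + d1 \<in> (\<lambda>b. b + (t + d0)) ` Bset P" by (intro image_eqI[of _ _ "u1 + d1 - (t + d0)"]) auto
    thus False using d1 by auto
  qed
  moreover have "u2 + d2 - (t + d0) \<notin> Bset P"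
  proof
    assume "u2 + d2 - (t + d0) \<in> Bset P"
    hence "u2 + d2 \<in> (\<lambda>b. b + (t + d0)) ` Bset P" by (intro image_eqI[of _ _ "u2 + d2 - (t + d0)"]) auto
    thus False using d2 by auto
  qed
  ultimately show ?thesis using d0 d1 d2 unfolding gen_def by auto
qed

lemma dist3: "dist (a::real, b::real, c::real) (a+d0, b+d1, c+d2) \<le> \<bar>d0\<bar> + \<bar>d1\<bar> + \<bar>d2\<bar>"
proof -
  have "dist (b, c) (b+d1, c+d2) \<le> \<bar>d1\<bar> + \<bar>d2\<bar>"
    unfolding dist_Pair_Pair using sqrt_sum_squares_le_sum_abs[of "dist b (b+d1)" "dist c (c+d2)"]
    by (simp add: dist_real_def)
  moreover have "dist (a, b, c) (a+d0, b+d1, c+d2) \<le> dist a (a+d0) + dist (b, c) (b+d1, c+d2)"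
    unfolding dist_Pair_Pair[of a "(b,c)"] using sqrt_sum_squares_le_sum_abs[of "dist a (a+d0)" "dist (b, c) (b+d1, c+d2)"]
    by simp
  ultimately show ?thesis by (simp add: dist_real_def)
qed

lemma piece_rep: assumes "(t,u1,u2) \<in> piece P L"
  obtains i j k :: int where "(t + 2* of_int i, u1 + P* of_int i + 2* of_int j, u2 + P* of_int i + 2* of_int k) \<in> fd_piece P L"
  using assms unfolding piece_def Lambda_def by (force simp: add.assoc)

lemma gen_rep: assumes "gen P (t,u1,u2)"
  shows "gen P (t + (of_int a + of_int b * P) + 2* of_int i, u1 + (of_int a1 + of_int b1 * P) + P* of_int i + 2* of_int j,
                 u2 + (of_int a2 + of_int b2 * P) + P* of_int i + 2* of_int k)"
proof -
  have g: "t \<notin> Bset P" "u1 \<notin> Bset P" "u2 \<notin> Bset P" "u1 - t \<notin> Bset P" "u2 - t \<notin> Bset P"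
    using assms unfolding gen_def by auto
  show ?thesis unfolding gen_def prod.case
    apply (intro conjI)
    apply (rule notB2[OF g(1), of _ "a + 2*i" b]; simp add: algebra_simps)
    apply (rule notB2[OF g(2), of _ "a1 + 2*j" "b1 + i"]; simp add: algebra_simps)
    apply (rule notB2[OF g(3), of _ "a2 + 2*k" "b2 + i"]; simp add: algebra_simps)
    apply (rule notB2[OF g(4), of _ "a1 + 2*j - a - 2*i" "b1 + i - b"]; simp add: algebra_simps)
    apply (rule notB2[OF g(5), of _ "a2 + 2*k - a - 2*i" "b2 + i - b"]; simp add: algebra_simps)
    done
qed

theorem lemma3p7:
  fixes P :: real and V :: pt3 and lab :: "int \<Rightarrow> int \<Rightarrow> letter set"
  assumes "0 < P" "P < 1" "P \<notin> \<rat>"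
    and "good_offset P V"
    and "tiling_of P V lab"
  shows "coherent lab"
proof -
  have P: "0 < P" "P < 1" using assms by auto
  have tl: "\<And>m n. Xi_center P V m n \<in> interior (piece P (lab m n))"
    using assms(5) unfolding tiling_of_def by auto
  have main: "(LE \<in> lab m n \<longleftrightarrow> LW \<in> lab (m+1) n) \<and> (LN \<in> lab m n \<longleftrightarrow> LS \<in> lab m (n+1))" for m n
  proof -
    obtain t u1 u2 where p: "Xi_center P V m n = (t,u1,u2)" by (metis prod_cases3)
    have p1: "Xi_center P V (m+1) n = (t+2*P, u1+2*P, u2+2*P)"
      using p unfolding Xi_center_def Xi_def by (cases V) (auto simp: algebra_simps)
    have p2: "Xi_center P V m (n+1) = (t+2, u1, u2+2*P)"
      using p unfolding Xi_center_def Xi_def by (cases V) (auto simp: algebra_simps)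
    obtain e0 where e0: "e0 > 0" "ball (t,u1,u2) e0 \<subseteq> piece P (lab m n)"
      using tl[of m n] p mem_interior by metis
    obtain e1 where e1: "e1 > 0" "ball (t+2*P, u1+2*P, u2+2*P) e1 \<subseteq> piece P (lab (m+1) n)"
      using tl[of "m+1" n] p1 mem_interior by metis
    obtain e2 where e2: "e2 > 0" "ball (t+2, u1, u2+2*P) e2 \<subseteq> piece P (lab m (n+1))"
      using tl[of m "n+1"] p2 mem_interior by metis
    define e where "e = min e0 (min e1 e2)"
    have e: "e > 0" "e \<le> e0" "e \<le> e1" "e \<le> e2" using e0 e1 e2 unfolding e_def by auto
    obtain d0 d1 d2 where d: "\<bar>d0\<bar> < e/3" "\<bar>d1\<bar> < e/3" "\<bar>d2\<bar> < e/3"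
      and gq: "gen P (t+d0, u1+d1, u2+d2)"
      using exists_gen[of "e/3" P t u1 u2] e by auto
    have close: "dist (a,b,c) (a+d0,b+d1,c+d2) < e" for a b c
      using dist3[of a b c d0 d1 d2] d by linarith
    have q0: "(t+d0, u1+d1, u2+d2) \<in> piece P (lab m n)"
      using e0(2) close[of t u1 u2] e by (auto simp: mem_ball)
    have q1: "(t+2*P+d0, u1+2*P+d1, u2+2*P+d2) \<in> piece P (lab (m+1) n)"
      using e1(2) close[of "t+2*P" "u1+2*P" "u2+2*P"] e by (auto simp: mem_ball)
    have q2: "(t+2+d0, u1+d1, u2+2*P+d2) \<in> piece P (lab m (n+1))"
      using e2(2) close[of "t+2" "u1" "u2+2*P"] e by (auto simp: mem_ball)
    obtain i j k :: int where
      y: "(t+d0 + 2 * of_int i, u1+d1 + P * of_int i + 2 * of_int j, u2+d2 + P * of_int i + 2 * of_int k)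
           \<in> fd_piece P (lab m n)" using piece_rep[OF q0] by blast
    obtain i1 j1 k1 :: int where
      y1: "(t+2*P+d0 + 2 * of_int i1, u1+2*P+d1 + P * of_int i1 + 2 * of_int j1, u2+2*P+d2 + P * of_int i1 + 2 * of_int k1)
           \<in> fd_piece P (lab (m+1) n)" using piece_rep[OF q1] by blast
    obtain i2 j2 k2 :: int where
      y2: "(t+2+d0 + 2 * of_int i2, u1+d1 + P * of_int i2 + 2 * of_int j2, u2+2*P+d2 + P * of_int i2 + 2 * of_int k2)
           \<in> fd_piece P (lab m (n+1))" using piece_rep[OF q2] by blast
    have gy: "gen P (t+d0 + 2 * of_int i, u1+d1 + P * of_int i + 2 * of_int j, u2+d2 + P * of_int i + 2 * of_int k)"
      using gen_rep[OF gq, of 0 0 i 0 0 j 0 0 k] by simp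
    have gy1: "gen P (t+2*P+d0 + 2 * of_int i1, u1+2*P+d1 + P * of_int i1 + 2 * of_int j1, u2+2*P+d2 + P * of_int i1 + 2 * of_int k1)"
      using gen_rep[OF gq, of 0 2 i1 0 2 j1 0 2 k1] by (simp add: algebra_simps)
    have gy2: "gen P (t+2+d0 + 2 * of_int i2, u1+d1 + P * of_int i2 + 2 * of_int j2, u2+2*P+d2 + P * of_int i2 + 2 * of_int k2)"
      using gen_rep[OF gq, of 2 0 i2 0 0 j2 0 2 k2] by (simp add: algebra_simps)
    note A = fdA[OF P y gy] and A1 = fdA[OF P y1 gy1] and A2 = fdA[OF P y2 gy2]
    have "psi P LE (t+d0 + 2 * of_int i, u1+d1 + P * of_int i + 2 * of_int j, u2+d2 + P * of_int i + 2 * of_int k)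
        = psi P LW (t+2*P+d0 + 2 * of_int i1, u1+2*P+d1 + P * of_int i1 + 2 * of_int j1, u2+2*P+d2 + P * of_int i1 + 2 * of_int k1)"
      apply (rule EW[where i="i1-i" and j="j1-j" and k="k1-k", OF P])
      using A[of LE] A1[of LW] by (auto simp: algebra_simps)
    moreover have "psi P LN (t+d0 + 2 * of_int i, u1+d1 + P * of_int i + 2 * of_int j, u2+d2 + P * of_int i + 2 * of_int k)
        = psi P LS (t+2+d0 + 2 * of_int i2, u1+d1 + P * of_int i2 + 2 * of_int j2, u2+2*P+d2 + P * of_int i2 + 2 * of_int k2)"
      apply (rule NS[where i="i2-i" and j="j2-j" and k="k2-k", OF P])
      using A[of LN] A2[of LS] by (auto simp: algebra_simps)
    ultimately show ?thesis using A[of LE] A[of LN] A1[of LW] A2[of LS] by blast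
  qed
  thus ?thesis unfolding coherent_def by blast
qed

end
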